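(* For every integer $n\ge 1$, $$\chi_i(Q_n)=\begin{cases} n+1 & \text{if } n=2^m-1 \text{ for some integer } m\ge 0,\\ n+2 & \text{otherwise.}\end{cases}$$
   Context: $Q_n$ is the $n$-dimensional hypercube: vertex set $\{0,1\}^n$, two vertices adjacent iff they differ in exactly one coordinate. An incidence of a graph $G$ is a pair $(v,e)$ with $v\in V(G)$, $e\in E(G)$ and $v\in e$. Two incidences $(v,e)$ and $(u,f)$ are adjacent if $v=u$, or $e=f$, or $vu\in\{e,f\}$. An incidence coloring assigns colors to all incidences so that adjacent incidences receive distinct colors. $\chi_i(G)$ is the least number of colors in an incidence coloring of $G$. *)

theory Defs
  imports Main
begin

text \<open>A simple graph is given by a vertex set V and a set E of 2-element vertex sets.\<close>

definition hypercube_vertices :: "nat \<Rightarrow> bool list set" where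
  "hypercube_vertices n = {xs. length xs = n}"

definition hypercube_edges :: "nat \<Rightarrow> bool list set set" where
  "hypercube_edges n = {{u, v} | u v. u \<in> hypercube_vertices n \<and> v \<in> hypercube_vertices n
      \<and> card {i. i < n \<and> u ! i \<noteq> v ! i} = 1}"

definition incidences :: "'a set \<Rightarrow> 'a set set \<Rightarrow> ('a \<times> 'a set) set" where
  "incidences V E = {(v, e). v \<in> V \<and> e \<in> E \<and> v \<in> e}"

definition incidence_adjacent :: "('a \<times> 'a set) \<Rightarrow> ('a \<times> 'a set) \<Rightarrow> bool" where
  "incidence_adjacent a b = (case a of (v, e) \<Rightarrow> case b of (u, f) \<Rightarrow>
      v = u \<or> e = f \<or> {v, u} \<in> {e, f})"

definition is_incidence_coloring :: "'a set \<Rightarrow> 'a set set \<Rightarrow> nat \<Rightarrow> ('a \<times> 'a set \<Rightarrow> nat) \<Rightarrow> bool" where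
  "is_incidence_coloring V E k c \<longleftrightarrow>
     (\<forall>a \<in> incidences V E. c a < k) \<and>
     (\<forall>a \<in> incidences V E. \<forall>b \<in> incidences V E. a \<noteq> b \<and> incidence_adjacent a b \<longrightarrow> c a \<noteq> c b)"

definition incidence_chromatic_number :: "'a set \<Rightarrow> 'a set set \<Rightarrow> nat" where
  "incidence_chromatic_number V E = (LEAST k. \<exists>c. is_incidence_coloring V E k c)"

end

theory Submission
  imports Defs "HOL-Computational_Algebra.Primes"
begin
unbundle bit_operations_syntax


lemma bit_le_self: "bit (x::nat) j \<Longrightarrow> j < x"
proof -
  assume b: "bit x j"
  have "\<not> x < 2 ^ j"
  proof
    assume "x < 2 ^ j"
    then have "take_bit j x = x" by (simp add: take_bit_nat_eq_self_iff)
    then have "bit x j = bit (take_bit j x) j" by simp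
    then show False using b by (simp add: bit_take_bit_iff)
  qed
  moreover have "j < 2 ^ j" by simp
  ultimately show ?thesis by linarith
qed

lemma finite_bits: "finite {j. bit (x::nat) j \<and> P j}"
  by (rule finite_subset[of _ "{..<x}"]) (auto dest: bit_le_self)

lemma less_pow_bit: "(x::nat) < 2 ^ p \<Longrightarrow> bit x j \<Longrightarrow> j < p"
proof (rule ccontr)
  assume "x < 2 ^ p" "bit x j" "\<not> j < p"
  then have "take_bit p x = x" by (simp add: take_bit_nat_eq_self_iff)
  then have "bit x j = bit (take_bit p x) j" by simp
  then show False using \<open>bit x j\<close> \<open>\<not> j < p\<close> by (simp add: bit_take_bit_iff)
qed

lemma bits_less_pow: "(\<And>j. bit (x::nat) j \<Longrightarrow> j < p) \<Longrightarrow> x < 2 ^ p"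
proof -
  assume h: "\<And>j. bit (x::nat) j \<Longrightarrow> j < p"
  have "take_bit p x = x"
    by (rule bit_eqI) (auto simp add: bit_take_bit_iff h)
  then show ?thesis by (simp add: take_bit_nat_eq_self_iff)
qed

lemma xor_less_pow: "(a::nat) < 2 ^ p \<Longrightarrow> b < 2 ^ p \<Longrightarrow> a XOR b < 2 ^ p"
  by (rule bits_less_pow) (auto simp add: bit_xor_iff dest: less_pow_bit)

lemma high_diff_bit:
  "(e::nat) < m \<Longrightarrow> \<exists>d. bit m d \<and> \<not> bit e d \<and> (\<forall>j>d. bit m j = bit e j)"
proof (induction m arbitrary: e rule: less_induct)
  case (less m)
  show ?case
  proof (cases "e div 2 = m div 2")
    case True
    then have "even e" "odd m" using less.prems by presburger+
    then show ?thesis using True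
      by (intro exI[of _ 0]) (auto simp add: bit_0 bit_Suc gr0_conv_Suc)
  next
    case False
    then have "e div 2 < m div 2" using less.prems by (simp add: div_le_mono le_neq_implies_less)
    moreover have "m div 2 < m" using less.prems by simp
    ultimately obtain d where "bit (m div 2) d" "\<not> bit (e div 2) d"
      "\<forall>j>d. bit (m div 2) j = bit (e div 2) j" using less.IH by blast
    then show ?thesis
      apply (intro exI[of _ "Suc d"])
      apply (simp add: bit_Suc)
      apply (intro allI impI)
      subgoal for j by (cases j) (auto simp add: bit_Suc)
      done
  qed
qed



definition pureb :: "nat \<Rightarrow> nat \<Rightarrow> bool" where
  "pureb m x \<longleftrightarrow> (\<forall>j. bit x j \<longrightarrow> bit m j)"
definition topnj :: "nat \<Rightarrow> nat \<Rightarrow> nat" where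
  "topnj m x = Max {j. bit x j \<and> \<not> bit m j}"
definition keyb :: "nat \<Rightarrow> nat \<Rightarrow> nat" where
  "keyb m x = take_bit (Suc (topnj m x)) x"
definition desx :: "nat \<Rightarrow> nat \<Rightarrow> nat \<Rightarrow> bool" where
  "desx m z x \<longleftrightarrow> (\<forall>j > topnj m x. bit x j = (bit z j \<and> bit m j))"
definition inT :: "nat \<Rightarrow> nat \<Rightarrow> nat \<Rightarrow> bool" where
  "inT m z x \<longleftrightarrow> x = 0 \<or> pureb m x \<or> \<not> desx m z x"
definition topj :: "nat \<Rightarrow> nat \<Rightarrow> nat" where
  "topj m u = Max {j. bit u j \<and> bit m j}"
definition mu :: "nat \<Rightarrow> nat \<Rightarrow> nat" where
  "mu m u = (if (\<forall>j. bit u j \<longrightarrow> \<not> bit m j) then 0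
             else Suc (take_bit (topj m u) m + take_bit (topj m u) u))"

lemma topnj_props:
  assumes "\<not> pureb m x"
  shows "bit x (topnj m x)" "\<not> bit m (topnj m x)"
    "\<And>j. bit x j \<Longrightarrow> \<not> bit m j \<Longrightarrow> j \<le> topnj m x"
proof -
  have ne: "{j. bit x j \<and> \<not> bit m j} \<noteq> {}" using assms by (auto simp: pureb_def)
  have "topnj m x \<in> {j. bit x j \<and> \<not> bit m j}"
    unfolding topnj_def using Max_in[OF finite_bits ne] .
  then show "bit x (topnj m x)" "\<not> bit m (topnj m x)" by auto
  show "\<And>j. bit x j \<Longrightarrow> \<not> bit m j \<Longrightarrow> j \<le> topnj m x"
    unfolding topnj_def by (rule Max_ge[OF finite_bits]) auto
qed

lemma topj_props:
  assumes "\<not> (\<forall>j. bit u j \<longrightarrow> \<not> bit m j)"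
  shows "bit u (topj m u)" "bit m (topj m u)"
    "\<And>j. bit u j \<Longrightarrow> bit m j \<Longrightarrow> j \<le> topj m u"
proof -
  have ne: "{j. bit u j \<and> bit m j} \<noteq> {}" using assms by auto
  have "topj m u \<in> {j. bit u j \<and> bit m j}"
    unfolding topj_def using Max_in[OF finite_bits ne] .
  then show "bit u (topj m u)" "bit m (topj m u)" by auto
  show "\<And>j. bit u j \<Longrightarrow> bit m j \<Longrightarrow> j \<le> topj m u"
    unfolding topj_def by (rule Max_ge[OF finite_bits]) auto
qed

lemma mu_le: "mu m u \<le> m"
proof (cases "\<forall>j. bit u j \<longrightarrow> \<not> bit m j")
  case True then show ?thesis by (simp add: mu_def)
next
  case False
  let ?k = "topj m u"
  have bk: "bit m ?k" using topj_props(2)[OF False] .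
  have "Suc (take_bit ?k m + take_bit ?k u) \<le> take_bit ?k m + 2 ^ ?k"
    using take_bit_nat_less_exp[of ?k u] by linarith
  also have "\<dots> = take_bit (Suc ?k) m" using bk by (simp add: take_bit_Suc_from_most)
  also have "\<dots> \<le> m" by simp
  finally show ?thesis using False by (simp add: mu_def)
qed

lemma mu_bound_lt: "mu m u < Suc (take_bit (Suc k) m)" if "\<forall>j>k. bit m j \<longrightarrow> \<not> bit u j"
  and "\<not> (\<forall>j. bit u j \<longrightarrow> \<not> bit m j)" for k
proof -
  let ?k = "topj m u"
  have bk: "bit m ?k" "bit u ?k" using topj_props[OF that(2)] by auto
  have "?k \<le> k" using that(1) bk by (meson not_le)
  have "Suc (take_bit ?k m + take_bit ?k u) \<le> take_bit ?k m + 2 ^ ?k"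
    using take_bit_nat_less_exp[of ?k u] by linarith
  also have "\<dots> = take_bit (Suc ?k) m" using bk by (simp add: take_bit_Suc_from_most)
  also have "\<dots> \<le> take_bit (Suc k) m" using \<open>?k \<le> k\<close> by (simp add: take_bit_tightened_less_eq_nat)
  finally show ?thesis using that(2) by (simp add: mu_def)
qed

lemma mu_eq_cases:
  assumes "mu m u = mu m w"
  shows "\<exists>t. (\<forall>j<t. bit u j = bit w j) \<and> (\<forall>j\<ge>t. bit m j \<longrightarrow> \<not> bit u j \<and> \<not> bit w j)"
proof (cases "\<forall>j. bit u j \<longrightarrow> \<not> bit m j")
  case Tu: True
  have "\<forall>j. bit w j \<longrightarrow> \<not> bit m j"
    using assms Tu by (auto simp: mu_def split: if_splits)
  then show ?thesis using Tu by (intro exI[of _ 0]) auto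
next
  case Fu: False
  have Fw: "\<not> (\<forall>j. bit w j \<longrightarrow> \<not> bit m j)"
    using assms Fu by (auto simp: mu_def split: if_splits)
  define k1 where "k1 = topj m u"
  define k2 where "k2 = topj m w"
  note P1 = topj_props[OF Fu, folded k1_def]
  note P2 = topj_props[OF Fw, folded k2_def]
  have e1: "mu m u = Suc (take_bit k1 m + take_bit k1 u)" using Fu by (simp add: mu_def k1_def)
  have e2: "mu m w = Suc (take_bit k2 m + take_bit k2 w)" using Fw by (simp add: mu_def k2_def)
  have lt: False if "a < b" "a = topj m x" "b = topj m y"
      "\<not> (\<forall>j. bit x j \<longrightarrow> \<not> bit m j)" "\<not> (\<forall>j. bit y j \<longrightarrow> \<not> bit m j)"
      "mu m x = mu m y" for a b x y
  proof -
    have "\<forall>j>a. bit m j \<longrightarrow> \<not> bit x j" using topj_props(3)[OF that(4)] that(2) by (meson not_le)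
    then have "mu m x < Suc (take_bit (Suc a) m)" using mu_bound_lt that(4) by blast
    also have "\<dots> \<le> Suc (take_bit b m)" using that(1) by (simp add: take_bit_tightened_less_eq_nat)
    also have "\<dots> \<le> mu m y" using that(5) that(3) by (simp add: mu_def)
    finally show False using that(6) by simp
  qed
  have "k1 = k2"
  proof (rule ccontr)
    assume "k1 \<noteq> k2"
    then consider "k1 < k2" | "k2 < k1" by linarith
    then show False
    proof cases
      case 1 show False by (rule lt[OF 1 k1_def k2_def Fu Fw assms])
    next
      case 2 show False by (rule lt[OF 2 k2_def k1_def Fw Fu assms[symmetric]])
    qed
  qed
  then have tb: "take_bit k1 u = take_bit k1 w" using assms e1 e2 by simp
  show ?thesis
  proof (intro exI[of _ "Suc k1"] conjI)
    show "\<forall>j<Suc k1. bit u j = bit w j"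
    proof (intro allI impI)
    fix j assume "j < Suc k1"
    then consider "j < k1" | "j = k1" by linarith
    then show "bit u j = bit w j"
    proof cases
      case 1
      then show ?thesis using arg_cong[OF tb, of "\<lambda>x. bit x j"] by (simp add: bit_take_bit_iff)
    next
      case 2 then show ?thesis using P1 P2 \<open>k1 = k2\<close> by simp
    qed
    qed
  next
    show "\<forall>j\<ge>Suc k1. bit m j \<longrightarrow> \<not> bit u j \<and> \<not> bit w j"
      using P1(3) P2(3) \<open>k1 = k2\<close> by fastforce
  qed
qed

lemma inT_highbits:
  assumes "inT m z x" "\<forall>j\<ge>t. bit m j \<longrightarrow> \<not> bit (z XOR x) j" "j \<ge> t" "\<not> bit m j"
  shows "\<not> bit x j"
proof
  assume bx: "bit x j"
  then have np: "\<not> pureb m x" using assms(4) by (auto simp: pureb_def)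
  have nz: "x \<noteq> 0" using bit_le_self[OF bx] by simp
  note TP = topnj_props[OF np]
  have "j \<le> topnj m x" using TP(3) bx assms(4) .
  have "desx m z x"
    unfolding desx_def
  proof (intro allI impI)
    fix i assume i: "topnj m x < i"
    show "bit x i = (bit z i \<and> bit m i)"
    proof (cases "bit m i")
      case True
      then have "\<not> bit (z XOR x) i" using assms(2) i \<open>j \<le> topnj m x\<close> assms(3) by auto
      then show ?thesis using True by (auto simp: bit_xor_iff)
    next
      case False
      then have "\<not> bit x i" using TP(3) i by fastforce
      then show ?thesis using False by simp
    qed
  qed
  then show False using assms(1) np nz by (simp add: inT_def)
qed

lemma mu_inj:
  assumes "inT m z x" "inT m z y" "mu m (z XOR x) = mu m (z XOR y)"
  shows "x = y"
proof -
  obtain t where t1: "\<forall>j<t. bit (z XOR x) j = bit (z XOR y) j"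
    and t2: "\<forall>j\<ge>t. bit m j \<longrightarrow> \<not> bit (z XOR x) j \<and> \<not> bit (z XOR y) j"
    using mu_eq_cases[OF assms(3)] by blast
  show ?thesis
  proof (rule bit_eqI)
    fix j
    show "bit x j = bit y j"
    proof (cases "j < t")
      case True then show ?thesis using t1 by (auto simp: bit_xor_iff)
    next
      case False
      show ?thesis
      proof (cases "bit m j")
        case True
        have "\<not> bit (z XOR x) j \<and> \<not> bit (z XOR y) j" using t2 False True by simp
        then show ?thesis by (auto simp: bit_xor_iff)
      next
        case nm: False
        have "\<not> bit x j" by (rule inT_highbits[OF assms(1) _ _ nm]) (use t2 False in auto)
        moreover have "\<not> bit y j" by (rule inT_highbits[OF assms(2) _ _ nm]) (use t2 False in auto)
        ultimately show ?thesis by simp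
      qed
    qed
  qed
qed

lemma inT_0: "inT m z 0" by (simp add: inT_def)

lemma keyb_props:
  assumes "\<not> pureb m x"
  shows "bit (keyb m x) (topnj m x)" "\<And>j. bit (keyb m x) j \<Longrightarrow> j \<le> topnj m x"
    "keyb m x \<le> x"
  using topnj_props[OF assms] by (auto simp: keyb_def bit_take_bit_iff)

lemma keyb_nz: "\<not> pureb m x \<Longrightarrow> keyb m x \<noteq> 0"
  using keyb_props(1) bit_le_self by fastforce

lemma keyb_inj:
  assumes "\<not> pureb m x" "\<not> pureb m y" "desx m z x" "desx m z y" "keyb m x = keyb m y"
  shows "x = y"
proof -
  have "topnj m x \<le> topnj m y" using keyb_props(1)[OF assms(1)] keyb_props(2)[OF assms(2)] assms(5) by simp
  moreover have "topnj m y \<le> topnj m x" using keyb_props(1)[OF assms(2)] keyb_props(2)[OF assms(1)] assms(5) by simp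
  ultimately have eq: "topnj m x = topnj m y" by simp
  show ?thesis
  proof (rule bit_eqI)
    fix j
    show "bit x j = bit y j"
    proof (cases "j \<le> topnj m x")
      case True
      then show ?thesis using arg_cong[OF assms(5), of "\<lambda>v. bit v j"] eq
        by (simp add: keyb_def bit_take_bit_iff)
    next
      case False
      then show ?thesis using assms(3,4) eq by (simp add: desx_def)
    qed
  qed
qed

lemma prim_not_key:
  assumes "e < m" "\<not> pureb m x"
  shows "m XOR e \<noteq> keyb m x"
proof
  assume eq: "m XOR e = keyb m x"
  obtain d where d: "bit m d" "\<not> bit e d" "\<forall>j>d. bit m j = bit e j" using high_diff_bit[OF assms(1)] by blast
  have "bit (keyb m x) d" using d eq[symmetric] by (simp add: bit_xor_iff)
  then have "d \<le> topnj m x" using keyb_props(2)[OF assms(2)] by blast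
  moreover have "\<not> d < topnj m x"
  proof
    assume "d < topnj m x"
    then have "\<not> bit (m XOR e) (topnj m x)" using d(3) by (simp add: bit_xor_iff)
    then show False using keyb_props(1)[OF assms(2)] eq by simp
  qed
  ultimately have "d = topnj m x" by simp
  then show False using d(1) topnj_props(2)[OF assms(2)] by simp
qed

lemma prim_nonzero: "e < m \<Longrightarrow> (m::nat) XOR e \<noteq> 0"
proof -
  assume "e < m"
  then obtain d where "bit m d" "\<not> bit e d" using high_diff_bit by blast
  then have "bit (m XOR e) d" by (simp add: bit_xor_iff)
  then show ?thesis using bit_le_self by fastforce
qed



definition flip :: "bool list \<Rightarrow> nat \<Rightarrow> bool list" where
  "flip v i = v[i := \<not> v ! i]"

fun lab :: "(nat \<Rightarrow> nat) \<Rightarrow> bool list \<Rightarrow> nat" where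
  "lab f [] = 0"
| "lab f (b # bs) = (if b then f 0 else 0) XOR lab (\<lambda>i. f (Suc i)) bs"

lemma xor_cancel_left: "a XOR (a XOR b) = (b::nat)"
  by (simp flip: xor.assoc)

lemma xor_left_inj: "(a XOR x = a XOR y) = (x = (y::nat))"
  by (metis xor_cancel_left)

lemma lab_flip: "i < length v \<Longrightarrow> lab f (flip v i) = lab f v XOR f i"
proof (induction v arbitrary: f i)
  case Nil then show ?case by simp
next
  case (Cons b bs)
  show ?case
  proof (cases i)
    case 0 then show ?thesis
      by (auto simp: flip_def xor.assoc xor.commute xor.left_commute xor_cancel_left)
  next
    case (Suc k)
    then have "k < length bs" using Cons.prems by simp
    then have "lab (\<lambda>i. f (Suc i)) (flip bs k) = lab (\<lambda>i. f (Suc i)) bs XOR f (Suc k)"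
      using Cons.IH by simp
    then show ?thesis using Suc by (simp add: flip_def xor.assoc)
  qed
qed

lemma lab_less: "(\<And>i. i < length v \<Longrightarrow> f i < 2 ^ p) \<Longrightarrow> lab f v < 2 ^ p"
proof (induction v arbitrary: f)
  case Nil then show ?case by simp
next
  case (Cons b bs)
  have "lab (\<lambda>i. f (Suc i)) bs < 2 ^ p" using Cons by force
  moreover have "(if b then f 0 else 0) < (2::nat) ^ p" using Cons.prems by simp
  ultimately show ?case by (simp add: xor_less_pow)
qed

lemma flip_length[simp]: "length (flip v i) = length v" by (simp add: flip_def)

lemma flip_ne: "i < length v \<Longrightarrow> flip v i \<noteq> v"
  by (metis flip_def nth_list_update_eq)

lemma flip_flip: "i < length v \<Longrightarrow> flip (flip v i) i = v"
  by (simp add: flip_def list_update_same_conv)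

lemma flip_nth: "i < length v \<Longrightarrow> flip v i ! j = (if j = i then \<not> v ! i else v ! j)"
  by (simp add: flip_def nth_list_update)

lemma flip_inj: "i < length v \<Longrightarrow> j < length v \<Longrightarrow> flip v i = flip v j \<Longrightarrow> i = j"
  by (metis flip_nth)

lemma edge_flip_inj:
  assumes "i < length v" "j < length v" "{v, flip v i} = {v, flip v j}"
  shows "i = j"
proof -
  have "flip v i \<in> {v, flip v j}" using assms(3) by blast
  then have "flip v i = flip v j" using flip_ne[OF assms(1)] by blast
  then show ?thesis using flip_inj assms by blast
qed

lemma flip_in_V: "v \<in> hypercube_vertices n \<Longrightarrow> flip v i \<in> hypercube_vertices n"
  by (simp add: hypercube_vertices_def)

lemma flip_edge:
  assumes "v \<in> hypercube_vertices n" "i < n"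
  shows "{v, flip v i} \<in> hypercube_edges n"
proof -
  have len: "length v = n" using assms by (simp add: hypercube_vertices_def)
  have "{j. j < n \<and> v ! j \<noteq> flip v i ! j} = {i}"
    using assms(2) len by (auto simp: flip_nth)
  then have "card {j. j < n \<and> v ! j \<noteq> flip v i ! j} = 1" by simp
  moreover have "flip v i \<in> hypercube_vertices n" using assms(1) by (rule flip_in_V)
  ultimately show ?thesis unfolding hypercube_edges_def
    using assms(1) by blast
qed

lemma edge_cases:
  assumes "e \<in> hypercube_edges n" "v \<in> e"
  shows "v \<in> hypercube_vertices n \<and> (\<exists>i<n. e = {v, flip v i})"
proof -
  obtain a b where e: "e = {a, b}" and a: "a \<in> hypercube_vertices n" and b: "b \<in> hypercube_vertices n"
    and c: "card {i. i < n \<and> a ! i \<noteq> b ! i} = 1"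
    using assms(1) unfolding hypercube_edges_def by blast
  have gen: "\<exists>i<n. {x, y} = {x, flip x i}"
    if xy: "x \<in> hypercube_vertices n" "y \<in> hypercube_vertices n"
       "card {i. i < n \<and> x ! i \<noteq> y ! i} = 1" for x y
  proof -
    obtain i where S: "{i. i < n \<and> x ! i \<noteq> y ! i} = {i}" using xy(3) card_1_singletonE by blast
    have lx: "length x = n" and ly: "length y = n" using xy by (auto simp: hypercube_vertices_def)
    have "i < n" using S by blast
    have "y = flip x i"
    proof (rule nth_equalityI)
      show "length y = length (flip x i)" using lx ly by simp
      fix j assume "j < length y"
      then have jn: "j < n" using ly by simp
      show "y ! j = flip x i ! j"
      proof (cases "j = i")
        case True
        then have "x ! i \<noteq> y ! i" using S by blast
        then show ?thesis using True \<open>i < n\<close> lx by (simp add: flip_nth)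
      next
        case False
        then have "x ! j = y ! j" using S jn by blast
        then show ?thesis using False \<open>i < n\<close> lx by (simp add: flip_nth)
      qed
    qed
    then show ?thesis using \<open>i < n\<close> by blast
  qed
  have c': "card {i. i < n \<and> b ! i \<noteq> a ! i} = 1" using c by (simp add: eq_commute)
  show ?thesis
  proof (cases "v = a")
    case True then show ?thesis using gen[OF a b c] e a by blast
  next
    case False
    then have "v = b" using assms(2) e by blast
    then show ?thesis using gen[OF b a c'] e b by (metis insert_commute)
  qed
qed

definition dirof :: "bool list \<Rightarrow> bool list set \<Rightarrow> nat" where
  "dirof v e = (THE i. i < length v \<and> e = {v, flip v i})"

lemma dirof_eq: "i < length v \<Longrightarrow> dirof v {v, flip v i} = i"
  unfolding dirof_def by (rule the_equality) (auto dest: edge_flip_inj)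

lemma abstract_coloring:
  fixes phi lam mu :: "nat \<Rightarrow> nat" and des :: "nat \<Rightarrow> nat \<Rightarrow> bool"
  assumes H1: "\<And>z i j. i<n \<Longrightarrow> j<n \<Longrightarrow> i\<noteq>j \<Longrightarrow> des z i \<Longrightarrow> des z j \<Longrightarrow> phi i \<noteq> phi j"
  and H2: "\<And>z i. i<n \<Longrightarrow> des z i \<Longrightarrow> phi i \<noteq> 0"
  and H3: "\<And>z i. i<n \<Longrightarrow> \<not> des z i \<Longrightarrow> mu (z XOR lam i) \<noteq> mu z"
  and H4: "\<And>z i j. i<n \<Longrightarrow> j<n \<Longrightarrow> i\<noteq>j \<Longrightarrow> \<not> des z i \<Longrightarrow> \<not> des z j
             \<Longrightarrow> mu (z XOR lam i) \<noteq> mu (z XOR lam j)"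
  and H5: "\<And>i. i<n \<Longrightarrow> phi i < 2^p"
  and H6: "\<And>z i. i<n \<Longrightarrow> \<not> des z i \<Longrightarrow> mu (z XOR lam i) < S"
  shows "\<exists>c. is_incidence_coloring (hypercube_vertices n) (hypercube_edges n) (2^p + S) c"
proof -
  define col where "col v i = (if des (lab lam v) i then lab phi v XOR phi i
                               else 2^p + mu (lab lam v XOR lam i))" for v i
  define c where "c a = col (fst a) (dirof (fst a) (snd a))" for a
  let ?V = "hypercube_vertices n" and ?E = "hypercube_edges n"
  have lenV: "length v = n" if "v \<in> ?V" for v using that by (simp add: hypercube_vertices_def)
  have inc: "\<exists>i<n. e = {v, flip v i} \<and> c (v, e) = col v i \<and> length v = n"
    if "(v, e) \<in> incidences ?V ?E" for v e
  proof -
    have "e \<in> ?E" "v \<in> e" "v \<in> ?V" using that by (auto simp: incidences_def)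
    then obtain i where "i < n" "e = {v, flip v i}" using edge_cases by blast
    moreover have "length v = n" using lenV \<open>v \<in> ?V\<close> by blast
    ultimately show ?thesis by (auto simp: c_def dirof_eq)
  qed
  have labA: "lab phi v < 2^p" if "length v = n" for v
    by (rule lab_less) (use H5 that in auto)
  have colA: "col v i < 2^p" if "des (lab lam v) i" "length v = n" "i < n" for v i
    using that labA H5 by (simp add: col_def xor_less_pow)
  have colB: "col v i \<ge> 2^p" if "\<not> des (lab lam v) i" for v i
    using that by (simp add: col_def)
  have D: "col v i \<noteq> col v j" if "i<n" "j<n" "i\<noteq>j" "length v = n" for v i j
  proof (cases "des (lab lam v) i")
    case Ti: True
    show ?thesis
    proof (cases "des (lab lam v) j")
      case True
      then have "phi i \<noteq> phi j" using H1 that Ti by blast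
      then show ?thesis using Ti True by (simp add: col_def xor_left_inj)
    next
      case False then show ?thesis using colA[OF Ti that(4,1)] colB[OF False] by linarith
    qed
  next
    case Fi: False
    show ?thesis
    proof (cases "des (lab lam v) j")
      case True then show ?thesis using colA[OF True that(4,2)] colB[OF Fi] by linarith
    next
      case False
      then have "mu (lab lam v XOR lam i) \<noteq> mu (lab lam v XOR lam j)" using H4 that Fi by blast
      then show ?thesis using Fi False by (simp add: col_def)
    qed
  qed
  have K: "col v i \<noteq> col (flip v i) j" if "i<n" "j<n" "length v = n" for v i j
  proof -
    let ?u = "flip v i"
    have lu: "length ?u = n" using that by simp
    have Lu: "lab phi ?u = lab phi v XOR phi i" and Xu: "lab lam ?u = lab lam v XOR lam i"
      using that by (auto simp: lab_flip)
    show ?thesis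
    proof (cases "des (lab lam v) i")
      case Ti: True
      have ci: "col v i = lab phi ?u" using Ti Lu by (simp add: col_def)
      show ?thesis
      proof (cases "des (lab lam ?u) j")
        case True
        then have "phi j \<noteq> 0" using H2 that by blast
        then have "lab phi ?u XOR phi j \<noteq> lab phi ?u"
          using xor_left_inj[of "lab phi ?u" "phi j" 0] by simp
        then show ?thesis using ci True by (simp add: col_def)
      next
        case False then show ?thesis using colA[OF Ti that(3,1)] colB[OF False] by linarith
      qed
    next
      case Fi: False
      have ci: "col v i = 2^p + mu (lab lam ?u)" using Fi Xu by (simp add: col_def)
      show ?thesis
      proof (cases "des (lab lam ?u) j")
        case True then show ?thesis using colA[OF True lu that(2)] colB[OF Fi] by linarith
      next
        case False
        then have "mu (lab lam ?u XOR lam j) \<noteq> mu (lab lam ?u)" using H3 that by blast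
        then show ?thesis using ci False by (simp add: col_def)
      qed
    qed
  qed
  have "is_incidence_coloring ?V ?E (2^p + S) c"
    unfolding is_incidence_coloring_def
  proof (intro conjI ballI impI)
    fix a assume "a \<in> incidences ?V ?E"
    then obtain v e where a: "a = (v, e)" "(v, e) \<in> incidences ?V ?E" by (cases a) auto
    then obtain i where i: "i < n" "c (v,e) = col v i" "length v = n" using inc by blast
    show "c a < 2^p + S"
    proof (cases "des (lab lam v) i")
      case True then show ?thesis using colA[OF True i(3,1)] a i by simp
    next
      case False
      then have "mu (lab lam v XOR lam i) < S" using H6 i by blast
      then show ?thesis using False a i by (simp add: col_def)
    qed
  next
    fix a b assume aI: "a \<in> incidences ?V ?E" and bI: "b \<in> incidences ?V ?E"
      and ab: "a \<noteq> b \<and> incidence_adjacent a b"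
    obtain v e where a: "a = (v, e)" by (cases a)
    obtain u f where b: "b = (u, f)" by (cases b)
    obtain i where i: "i < n" "e = {v, flip v i}" "c a = col v i" "length v = n"
      using inc aI a by blast
    obtain j where j: "j < n" "f = {u, flip u j}" "c b = col u j" "length u = n"
      using inc bI b by blast
    have adj: "v = u \<or> e = f \<or> {v, u} \<in> {e, f}"
      using ab a b by (simp add: incidence_adjacent_def)
    have case_e: "c a \<noteq> c b" if "u \<in> e" "u \<noteq> v"
    proof -
      have "u = flip v i" using that i(2) by blast
      then show ?thesis using K[OF i(1) j(1) i(4)] i j by simp
    qed
    have case_f: "c a \<noteq> c b" if "v \<in> f" "u \<noteq> v"
    proof -
      have "v = flip u j" using that j(2) by blast
      then show ?thesis using K[OF j(1) i(1) j(4)] i j by simp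
    qed
    have fne: "flip v i \<noteq> v" using flip_ne i by simp
    have fne2: "flip u j \<noteq> u" using flip_ne j by simp
    show "c a \<noteq> c b"
    proof (cases "v = u")
      case True
      then have "e \<noteq> f" using ab a b by simp
      then have "i \<noteq> j" using i j True by auto
      then show ?thesis using D[OF i(1) j(1) _ i(4)] i j True by simp
    next
      case False
      from adj False consider "e = f" | "{v, u} = e" | "{v, u} = f" by blast
      then show ?thesis
      proof cases
        case 1
        then have "u \<in> e" using j(2) by blast
        then show ?thesis using case_e False by blast
      next
        case 2 then show ?thesis using case_e False by blast
      next
        case 3 then show ?thesis using case_f False by blast
      qed
    qed
  qed
  then show ?thesis by blast
qed



lemma nz_has_bit: "(x::nat) \<noteq> 0 \<Longrightarrow> \<exists>j. bit x j"
proof (rule ccontr)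
  assume "x \<noteq> 0" "\<not> (\<exists>j. bit x j)"
  then have "x < 2 ^ 0" using bits_less_pow[of x 0] by blast
  then show False using \<open>x \<noteq> 0\<close> by simp
qed

lemma upper_bound:
  assumes "2 ^ p \<le> n + 1" "n + 1 < 2 ^ (Suc p)"
  shows "\<exists>c. is_incidence_coloring (hypercube_vertices n) (hypercube_edges n)
            (2 ^ p + (if n + 1 = 2 ^ p then 0 else Suc (n + 1 - 2 ^ p))) c"
proof -
  define P :: nat where "P = 2 ^ p"
  define m where "m = n + 1 - P"
  have nP: "n = P - 1 + m" using assms by (simp add: P_def m_def)
  have mP: "m < P" using assms by (simp add: P_def m_def)
  have P1: "P \<ge> 1" by (simp add: P_def)
  define lam where "lam i = (if i < P - 1 then i + 1 else 0)" for i
  define phi where "phi i = (if i < P - 1 then (if pureb m (i+1) then 0 else keyb m (i+1))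
                             else m XOR (i - (P - 1)))" for i
  define des where "des z i = (if i < P - 1 then \<not> pureb m (i+1) \<and> desx m z (i+1) else True)" for z i
  define S where "S = (if m = 0 then 0 else Suc m)"
  have ndes: "i < P - 1 \<and> inT m z (i+1)" if "\<not> des z i" for z i
    using that by (auto simp: des_def inT_def split: if_splits)
  have "\<exists>c. is_incidence_coloring (hypercube_vertices n) (hypercube_edges n) (2 ^ p + S) c"
  proof (rule abstract_coloring[where phi = phi and lam = lam and des = des and mu = "mu m"])
    fix z i j assume ij: "i < n" "j < n" "i \<noteq> j" "des z i" "des z j"
    have gen: False if "i' < P - 1" "\<not> j' < P - 1" "des z i'" "j' < n" "phi i' = phi j'" for i' j'
    proof -
      have np: "\<not> pureb m (i'+1)" using that by (simp add: des_def)
      have e: "j' - (P - 1) < m" using that nP by linarith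
      have "m XOR (j' - (P - 1)) \<noteq> keyb m (i'+1)" by (rule prim_not_key[OF e np])
      then show False using that np by (simp add: phi_def)
    qed
    show "phi i \<noteq> phi j"
    proof
      assume eq: "phi i = phi j"
      show False
      proof (cases "i < P - 1")
        case Ti: True
        show False
        proof (cases "j < P - 1")
          case True
          have "\<not> pureb m (i+1)" "desx m z (i+1)" "\<not> pureb m (j+1)" "desx m z (j+1)"
            using ij Ti True by (auto simp: des_def)
          moreover have "keyb m (i+1) = keyb m (j+1)" using eq Ti True calculation by (simp add: phi_def)
          ultimately have "i + 1 = j + 1" using keyb_inj by blast
          then show False using ij by simp
        next
          case False then show False using gen[OF Ti False ij(4) ij(2) eq] by blast
        qed
      next
        case Fi: False
        show False
        proof (cases "j < P - 1")
          case True then show False using gen[OF True Fi ij(5) ij(1) eq[symmetric]] by blast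
        next
          case False
          then have "m XOR (i - (P - 1)) = m XOR (j - (P - 1))" using eq Fi by (simp add: phi_def)
          then have "i - (P - 1) = j - (P - 1)" by (simp add: xor_left_inj)
          then show False using Fi False ij by linarith
        qed
      qed
    qed
  next
    fix z i assume i: "i < n" "des z i"
    show "phi i \<noteq> 0"
    proof (cases "i < P - 1")
      case True
      then have "\<not> pureb m (i+1)" using i by (simp add: des_def)
      then show ?thesis using True keyb_nz by (simp add: phi_def)
    next
      case False
      have "i - (P - 1) < m" using i nP False by linarith
      then show ?thesis using False prim_nonzero by (simp add: phi_def)
    qed
  next
    fix z i assume i: "i < n" "\<not> des z i"
    then have T: "i < P - 1" "inT m z (i+1)" using ndes by auto
    show "mu m (z XOR lam i) \<noteq> mu m z"
    proof
      assume "mu m (z XOR lam i) = mu m z"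
      then have "mu m (z XOR (i+1)) = mu m (z XOR 0)" using T by (simp add: lam_def)
      then have "i + 1 = 0" using mu_inj[OF T(2) inT_0] by blast
      then show False by simp
    qed
  next
    fix z i j assume ij: "i < n" "j < n" "i \<noteq> j" "\<not> des z i" "\<not> des z j"
    then have T: "i < P - 1" "inT m z (i+1)" "j < P - 1" "inT m z (j+1)" using ndes by auto
    show "mu m (z XOR lam i) \<noteq> mu m (z XOR lam j)"
    proof
      assume "mu m (z XOR lam i) = mu m (z XOR lam j)"
      then have "mu m (z XOR (i+1)) = mu m (z XOR (j+1))" using T by (simp add: lam_def)
      then have "i + 1 = j + 1" using mu_inj[OF T(2) T(4)] by blast
      then show False using ij by simp
    qed
  next
    fix i assume i: "i < n"
    show "phi i < 2 ^ p"
    proof (cases "i < P - 1")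
      case True
      have "keyb m (i+1) \<le> i + 1" if "\<not> pureb m (i+1)" using keyb_props(3)[OF that] .
      then show ?thesis using True P1 by (auto simp: phi_def P_def)
    next
      case False
      have "i - (P - 1) < P" using i nP mP False by linarith
      then show ?thesis using False mP xor_less_pow by (simp add: phi_def P_def)
    qed
  next
    fix z i assume i: "i < n" "\<not> des z i"
    then have T: "i < P - 1" "inT m z (i+1)" using ndes by auto
    show "mu m (z XOR lam i) < S"
    proof (cases "m = 0")
      case True
      have np: "\<not> pureb m (i+1)"
      proof -
        obtain j where "bit (i+1) j" using nz_has_bit[of "i+1"] by auto
        then show ?thesis using True by (auto simp: pureb_def)
      qed
      moreover have "desx m z (i+1)"
        using topnj_props(3)[OF np] True by (fastforce simp: desx_def)
      ultimately show ?thesis using i T by (simp add: des_def)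
    next
      case False
      then show ?thesis using mu_le[of m] by (simp add: S_def less_Suc_eq_le)
    qed
  qed
  moreover have "S = (if n + 1 = 2 ^ p then 0 else Suc (n + 1 - 2 ^ p))"
    using assms by (auto simp: S_def m_def P_def)
  ultimately show ?thesis by simp
qed



lemma inc_flip:
  assumes "v \<in> hypercube_vertices n" "i < n"
  shows "(v, {v, flip v i}) \<in> incidences (hypercube_vertices n) (hypercube_edges n)"
  using assms flip_edge by (auto simp: incidences_def)

lemma lower1:
  assumes "n \<ge> 1" "is_incidence_coloring (hypercube_vertices n) (hypercube_edges n) k c"
  shows "n + 1 \<le> k"
proof -
  let ?V = "hypercube_vertices n" and ?E = "hypercube_edges n"
  define v0 where "v0 = replicate n False"
  have v0V: "v0 \<in> ?V" by (simp add: v0_def hypercube_vertices_def)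
  have lv0: "length v0 = n" by (simp add: v0_def)
  define u where "u = flip v0 0"
  have uV: "u \<in> ?V" using v0V by (simp add: u_def flip_in_V)
  have u0: "flip u 0 = v0" using assms(1) lv0 by (simp add: u_def flip_flip)
  have une: "u \<noteq> v0" using assms(1) lv0 flip_ne by (simp add: u_def)
  define g where "g i = (if i < n then (v0, {v0, flip v0 i}) else (u, {u, v0}))" for i
  have gI: "g i \<in> incidences ?V ?E" for i
  proof (cases "i < n")
    case True then show ?thesis using inc_flip[OF v0V True] by (simp add: g_def)
  next
    case False
    have "(u, {u, flip u 0}) \<in> incidences ?V ?E" using inc_flip[OF uV] assms(1) by simp
    then show ?thesis using False u0 by (simp add: g_def)
  qed
  have gadj: "g i \<noteq> g j \<and> incidence_adjacent (g i) (g j)" if "i < Suc n" "j < Suc n" "i \<noteq> j" for i j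
  proof (cases "i < n")
    case Ti: True
    show ?thesis
    proof (cases "j < n")
      case True
      have "{v0, flip v0 i} \<noteq> {v0, flip v0 j}" using edge_flip_inj[of i v0 j] Ti True lv0 that(3) by auto
      then show ?thesis using Ti True by (simp add: g_def incidence_adjacent_def)
    next
      case False
      then show ?thesis using Ti une by (auto simp: g_def incidence_adjacent_def insert_commute)
    qed
  next
    case Fi: False
    then have "j < n" using that by auto
    then show ?thesis using Fi une by (auto simp: g_def incidence_adjacent_def insert_commute)
  qed
  have inj: "inj_on (c \<circ> g) {..<Suc n}"
  proof (rule inj_onI)
    fix i j assume "i \<in> {..<Suc n}" "j \<in> {..<Suc n}" "(c \<circ> g) i = (c \<circ> g) j"
    then have ij: "i < Suc n" "j < Suc n" "c (g i) = c (g j)" by auto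
    show "i = j"
    proof (rule ccontr)
      assume "i \<noteq> j"
      then have "g i \<noteq> g j \<and> incidence_adjacent (g i) (g j)" using gadj ij by blast
      then have "c (g i) \<noteq> c (g j)" using gI assms(2) unfolding is_incidence_coloring_def by blast
      then show False using ij by simp
    qed
  qed
  have "(c \<circ> g) ` {..<Suc n} \<subseteq> {..<k}" using gI assms(2) by (auto simp: is_incidence_coloring_def)
  then have "card {..<Suc n} \<le> card {..<k}" using card_inj_on_le[OF inj] by blast
  then show ?thesis by simp
qed

lemma lower2:
  assumes "n \<ge> 1" "is_incidence_coloring (hypercube_vertices n) (hypercube_edges n) (n + 1) c"
  shows "\<exists>m. n = 2 ^ m - 1"
proof -
  let ?V = "hypercube_vertices n" and ?E = "hypercube_edges n"
  have col: "\<And>a. a \<in> incidences ?V ?E \<Longrightarrow> c a < n + 1"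
    and dis: "\<And>a b. a \<in> incidences ?V ?E \<Longrightarrow> b \<in> incidences ?V ?E \<Longrightarrow> a \<noteq> b
               \<Longrightarrow> incidence_adjacent a b \<Longrightarrow> c a \<noteq> c b"
    using assms(2) by (auto simp: is_incidence_coloring_def)
  have lenV: "length v = n" if "v \<in> ?V" for v using that by (simp add: hypercube_vertices_def)
  define ce where "ce v i = c (v, {v, flip v i})" for v i
  define out where "out v = ce v ` {..<n}" for v
  have ce_inj: "inj_on (ce v) {..<n}" if "v \<in> ?V" for v
  proof (rule inj_onI)
    fix i j assume ij: "i \<in> {..<n}" "j \<in> {..<n}" "ce v i = ce v j"
    show "i = j"
    proof (rule ccontr)
      assume "i \<noteq> j"
      then have "{v, flip v i} \<noteq> {v, flip v j}" using edge_flip_inj lenV[OF that] ij by auto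
      then show False using dis[OF inc_flip[OF that] inc_flip[OF that]] ij
        by (auto simp: ce_def incidence_adjacent_def)
    qed
  qed
  have card_out: "card (out v) = n" if "v \<in> ?V" for v
    using card_image[OF ce_inj[OF that]] by (simp add: out_def)
  have out_sub: "out v \<subseteq> {..<n+1}" if "v \<in> ?V" for v
    using col inc_flip[OF that] by (auto simp: out_def ce_def)
  have uniq: "x = y" if "v \<in> ?V" "x < n + 1" "y < n + 1" "x \<notin> out v" "y \<notin> out v" for v x y
  proof -
    have "card ({..<n+1} - out v) = 1"
      using card_Diff_subset[OF _ out_sub[OF that(1)]] card_out[OF that(1)] finite_subset[OF out_sub[OF that(1)]]
      by simp
    then obtain w where w: "{..<n+1} - out v = {w}" using card_1_singletonE by blast
    have "x \<in> {..<n+1} - out v" "y \<in> {..<n+1} - out v" using that by auto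
    then show ?thesis unfolding w by simp
  qed
  have cross: "ce v i \<notin> out (flip v i)" if "v \<in> ?V" "i < n" for v i
  proof
    let ?u = "flip v i"
    assume "ce v i \<in> out ?u"
    then obtain j where j: "j < n" "ce v i = ce ?u j" by (auto simp: out_def)
    have uV: "?u \<in> ?V" using that by (simp add: flip_in_V)
    have ne: "?u \<noteq> v" using flip_ne lenV[OF that(1)] that(2) by simp
    have "c (v, {v, ?u}) \<noteq> c (?u, {?u, flip ?u j})"
      using dis[OF inc_flip[OF that] inc_flip[OF uV j(1)]] ne
      by (auto simp: incidence_adjacent_def)
    then show False using j by (simp add: ce_def)
  qed
  define C0 where "C0 = {u \<in> ?V. 0 \<notin> out u}"
  have C0_iff: "flip v i \<in> C0 \<longleftrightarrow> ce v i = 0" if "v \<in> ?V" "i < n" for v i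
  proof
    assume "flip v i \<in> C0"
    then have "0 \<notin> out (flip v i)" by (simp add: C0_def)
    moreover have "ce v i < n + 1" using col inc_flip[OF that] by (simp add: ce_def)
    ultimately show "ce v i = 0" using uniq[OF flip_in_V[OF that(1)] _ _ cross[OF that]] by simp
  next
    assume "ce v i = 0"
    then show "flip v i \<in> C0" using cross[OF that] flip_in_V[OF that(1)] by (simp add: C0_def)
  qed
  have finV: "finite ?V"
  proof -
    have "?V = {xs. set xs \<subseteq> UNIV \<and> length xs = n}" by (simp add: hypercube_vertices_def)
    then show ?thesis using finite_lists_length_eq[of "UNIV :: bool set" n] by simp
  qed
  have cardV: "card ?V = 2 ^ n"
  proof -
    have "?V = {xs. set xs \<subseteq> UNIV \<and> length xs = n}" by (simp add: hypercube_vertices_def)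
    then show ?thesis using card_lists_length_eq[of "UNIV :: bool set" n] by simp
  qed
  have C0V: "C0 \<subseteq> ?V" by (auto simp: C0_def)
  define B where "B v = {i. i < n \<and> flip v i \<in> C0}" for v
  have cardB: "card (B v) = (if v \<in> C0 then 0 else 1)" if "v \<in> ?V" for v
  proof (cases "v \<in> C0")
    case True
    then have "0 \<notin> out v" by (simp add: C0_def)
    then have "B v = {}" using C0_iff[OF that] by (auto simp: B_def out_def)
    then show ?thesis using True by simp
  next
    case False
    then have "0 \<in> out v" using that by (simp add: C0_def)
    then obtain i where i: "i < n" "ce v i = 0" by (auto simp: out_def)
    have "B v = {i}"
    proof
      show "B v \<subseteq> {i}"
      proof
        fix j assume "j \<in> B v"
        then have "j < n" "ce v j = 0" using C0_iff[OF that] by (auto simp: B_def)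
        then show "j \<in> {i}" using inj_onD[OF ce_inj[OF that]] i by fastforce
      qed
      show "{i} \<subseteq> B v" using C0_iff[OF that] i by (auto simp: B_def)
    qed
    then show ?thesis using False by simp
  qed
  define Pairs where "Pairs = Sigma ?V B"
  have "card Pairs = (\<Sum>v\<in>?V. card (B v))"
    unfolding Pairs_def by (rule card_SigmaI) (auto simp: finV B_def)
  also have "\<dots> = (\<Sum>v\<in>?V. (if v \<in> C0 then 0 else 1))" using cardB by (rule sum.cong[OF refl])
  also have "\<dots> = card (?V - C0)"
  proof -
    have "(\<Sum>v\<in>?V. (if v \<in> C0 then 0 else 1::nat)) = (\<Sum>v\<in>?V - C0. 1)"
      using finV by (simp add: sum.If_cases Diff_eq)
    then show ?thesis by simp
  qed
  also have "\<dots> = 2 ^ n - card C0" using card_Diff_subset[OF finite_subset[OF C0V finV] C0V] cardV by simp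
  finally have P1: "card Pairs = 2 ^ n - card C0" .
  have "bij_betw (\<lambda>(v, i). (flip v i, i)) Pairs (C0 \<times> {..<n})"
  proof (rule bij_betw_imageI)
    show "inj_on (\<lambda>(v, i). (flip v i, i)) Pairs"
    proof (rule inj_onI, clarsimp)
      fix v i w assume "(v, i) \<in> Pairs" "(w, i) \<in> Pairs" "flip v i = flip w i"
      then show "v = w" using flip_flip lenV by (metis B_def Pairs_def SigmaD1 SigmaD2 mem_Collect_eq)
    qed
    show "(\<lambda>(v, i). (flip v i, i)) ` Pairs = C0 \<times> {..<n}"
    proof
      show "(\<lambda>(v, i). (flip v i, i)) ` Pairs \<subseteq> C0 \<times> {..<n}"
        by (auto simp: Pairs_def B_def)
      show "C0 \<times> {..<n} \<subseteq> (\<lambda>(v, i). (flip v i, i)) ` Pairs"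
      proof clarsimp
        fix u i assume "u \<in> C0" "i < n"
        then have "u \<in> ?V" using C0V by blast
        then have "(flip u i, i) \<in> Pairs" "flip (flip u i) i = u"
          using \<open>u \<in> C0\<close> \<open>i < n\<close> flip_flip lenV flip_in_V by (auto simp: Pairs_def B_def)
        then show "(u, i) \<in> (\<lambda>(v, i). (flip v i, i)) ` Pairs" by force
      qed
    qed
  qed
  then have "card Pairs = card (C0 \<times> {..<n})" by (rule bij_betw_same_card)
  then have "card Pairs = card C0 * n" by (simp add: card_cartesian_product)
  with P1 have "card C0 * n = 2 ^ n - card C0" by simp
  moreover have "card C0 \<le> 2 ^ n" using card_mono[OF finV C0V] cardV by simp
  ultimately have "card C0 * (n + 1) = 2 ^ n" by (simp add: algebra_simps)
  then have "(n + 1) dvd 2 ^ n" by (metis dvd_triv_right)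
  then obtain j where "j \<le> n" "normalize (n + 1) = 2 ^ j"
    using divides_primepow[OF two_is_prime_nat] by blast
  then have "n + 1 = 2 ^ j" by simp
  then show ?thesis by (intro exI[of _ j]) simp
qed


theorem mainTheorem4:
  fixes n :: nat
  assumes "n \<ge> 1"
  shows "incidence_chromatic_number (hypercube_vertices n) (hypercube_edges n)
           = (if \<exists>m::nat. n = 2 ^ m - 1 then n + 1 else n + 2)"
proof -
  obtain p where p: "2 ^ p \<le> n + 1" "n + 1 < 2 ^ (p + 1)"
    using ex_power_ivl1[of 2 "n + 1"] by auto
  obtain c where c: "is_incidence_coloring (hypercube_vertices n) (hypercube_edges n)
            (2 ^ p + (if n + 1 = 2 ^ p then 0 else Suc (n + 1 - 2 ^ p))) c"
    using upper_bound[of p n] p by auto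
  show ?thesis
  proof (cases "\<exists>m::nat. n = 2 ^ m - 1")
    case True
    then obtain m :: nat where m: "n = 2 ^ m - 1" by blast
    have nm: "n + 1 = 2 ^ m" using m by simp
    have "p \<le> m" using p(1) nm power_le_imp_le_exp[of 2 p m] by simp
    moreover have "m < p + 1" using p(2) nm power_less_imp_less_exp[of 2 m "p+1"] by simp
    ultimately have "m = p" by simp
    then have np: "n + 1 = 2 ^ p" using nm by simp
    have "incidence_chromatic_number (hypercube_vertices n) (hypercube_edges n) = n + 1"
      unfolding incidence_chromatic_number_def
    proof (rule Least_equality)
      show "\<exists>c. is_incidence_coloring (hypercube_vertices n) (hypercube_edges n) (n + 1) c"
        using c np by auto
      fix k assume "\<exists>c. is_incidence_coloring (hypercube_vertices n) (hypercube_edges n) k c"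
      then show "n + 1 \<le> k" using lower1[OF assms] by blast
    qed
    then show ?thesis using True by simp
  next
    case False
    have np: "n + 1 \<noteq> 2 ^ p"
    proof
      assume "n + 1 = 2 ^ p"
      then have "n = 2 ^ p - 1" by simp
      then show False using False by blast
    qed
    have "incidence_chromatic_number (hypercube_vertices n) (hypercube_edges n) = n + 2"
      unfolding incidence_chromatic_number_def
    proof (rule Least_equality)
      have "2 ^ p + Suc (n + 1 - 2 ^ p) = n + 2" using p(1) by simp
      then show "\<exists>c. is_incidence_coloring (hypercube_vertices n) (hypercube_edges n) (n + 2) c"
        using c np by auto
      fix k assume k: "\<exists>c. is_incidence_coloring (hypercube_vertices n) (hypercube_edges n) k c"
      then have "n + 1 \<le> k" using lower1[OF assms] by blast
      moreover have "k \<noteq> n + 1"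
      proof
        assume "k = n + 1"
        then have "\<exists>m. n = 2 ^ m - 1" using k lower2[OF assms] by blast
        then show False using False by blast
      qed
      ultimately show "n + 2 \<le> k" by simp
    qed
    then show ?thesis using False by simp
  qed
qed

end
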